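(* Let $n\ge2$, $N=\binom n2$. Let $T_{\Delta_n}$ be a uniformly random standard Young tableau of shape $\Delta_n$, let $P_1<\dots<P_N$ be the order statistics of $N$ i.i.d. Uniform$[0,1]$ random variables independent of $T_{\Delta_n}$, and let $\mathcal T_{\Delta_n}$ be obtained from $T_{\Delta_n}$ by replacing each entry $r$ by $P_r$ (so $\mathcal T_{\Delta_n}$ is a uniformly random Poissonized Young tableau of shape $\Delta_n$). Fix integers $(l,m)$ with $l\ge2$, $1\le m\le\lfloor l/2\rfloor$ (rotated coordinates). Then for every $\delta>0$, $$n^{1-\delta}\Big|\mathcal T_{\Delta_n}(l,m)-\frac{T_{\Delta_n}(l,m)}{N}\Big|\longrightarrow0\quad\text{in probability as }n\to\infty.$$
   Context: $\Delta_n$ is the Young diagram with row lengths $n-i$, $i=1,\dots,n-1$. A standard Young tableau of shape $\lambda$ is a filling of the boxes by $1,\dots,|\lambda|$ strictly increasing along rows and columns. Rotated coordinates: box $(i,j)$ has coordinates $l=n-i+j$, $m=\frac{n-i-j}{2}+1$ if $n-i-j$ is even and $m=\frac{n-i-j+1}{2}$ if odd; $T(l,m)$ is the entry of that box. *)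

theory Defs
  imports "HOL-Probability.Probability"
begin

text \<open>Boxes are pairs (i,j): row i, column j, both 1-based.
  The staircase shape Delta_n has rows i = 1..n-1 of length n-i.\<close>
definition delta_shape :: "nat \<Rightarrow> (nat \<times> nat) set" where
  "delta_shape n = {(i, j). 1 \<le> i \<and> i \<le> n - 1 \<and> 1 \<le> j \<and> j \<le> n - i}"

definition tri_N :: "nat \<Rightarrow> nat" where
  "tri_N n = n choose 2"

definition SYT :: "(nat \<times> nat) set \<Rightarrow> (nat \<times> nat \<Rightarrow> nat) set" where
  "SYT sh = {T. bij_betw T sh {1..card sh}
     \<and> (\<forall>i j. (i, j) \<in> sh \<and> (i, j + 1) \<in> sh \<longrightarrow> T (i, j) < T (i, j + 1))
     \<and> (\<forall>i j. (i, j) \<in> sh \<and> (i + 1, j) \<in> sh \<longrightarrow> T (i, j) < T (i + 1, j))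
     \<and> (\<forall>b. b \<notin> sh \<longrightarrow> T b = 0)}"

definition rot_coord :: "nat \<Rightarrow> nat \<times> nat \<Rightarrow> nat \<times> nat" where
  "rot_coord n b = (case b of (i, j) \<Rightarrow>
     (n - i + j,
      if even (n - i - j) then (n - i - j) div 2 + 1 else (n - i - j + 1) div 2))"

text \<open>The box of Delta_n having rotated coordinates (l,m), so that T(l,m) = T (rot_box n l m).\<close>
definition rot_box :: "nat \<Rightarrow> nat \<Rightarrow> nat \<Rightarrow> nat \<times> nat" where
  "rot_box n l m = (THE b. b \<in> delta_shape n \<and> rot_coord n b = (l, m))"

text \<open>Order statistics P_1 < ... < P_N of U_0, ..., U_{N-1} (P_r is the r-th smallest, 1-based).\<close>
definition order_stat :: "nat \<Rightarrow> (nat \<Rightarrow> real) \<Rightarrow> nat \<Rightarrow> real" where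
  "order_stat N U r = sort (map U [0..<N]) ! (r - 1)"

definition joint_space :: "nat \<Rightarrow> ((nat \<times> nat \<Rightarrow> nat) \<times> (nat \<Rightarrow> real)) measure" where
  "joint_space n = measure_pmf (pmf_of_set (SYT (delta_shape n)))
     \<Otimes>\<^sub>M (\<Pi>\<^sub>M k\<in>{..<tri_N n}. uniform_measure lborel {0..1::real})"

definition poissonized :: "nat \<Rightarrow> (nat \<times> nat \<Rightarrow> nat) \<Rightarrow> (nat \<Rightarrow> real) \<Rightarrow> nat \<times> nat \<Rightarrow> real" where
  "poissonized n T U b = order_stat (tri_N n) U (T b)"

end

theory Submission
  imports Defs
begin


abbreviation UM :: "real measure" where "UM \<equiv> uniform_measure lborel {0..1::real}"

lemma prob_UM: "prob_space UM"
  by (rule prob_space_uniform_measure) auto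

definition Om :: "nat \<Rightarrow> (nat \<Rightarrow> real) measure" where
  "Om N = (\<Pi>\<^sub>M k\<in>{..<N}. UM)"

lemma prob_Om: "prob_space (Om N)"
  unfolding Om_def by (intro prob_space_PiM prob_UM)

lemma indep_coord:
  assumes "N > 0"
  shows "prob_space.indep_vars (Om N) (\<lambda>_. UM) (\<lambda>k U. U k) {..<N}"
proof -
  interpret P: prob_space "Om N" by (rule prob_Om)
  have ne: "{..<N} \<noteq> {}" using assms by auto
  show ?thesis
  proof (subst P.indep_vars_iff_distr_eq_PiM'[OF ne])
    show "(\<lambda>U. U k) \<in> measurable (Om N) UM" if "k \<in> {..<N}" for k
      using that by (simp add: Om_def measurable_component_singleton)
    have "distr (Om N) (\<Pi>\<^sub>M i\<in>{..<N}. UM) (\<lambda>x. restrict x {..<N}) = distr (Om N) (Om N) (\<lambda>x. x)"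
      by (rule distr_cong) (auto simp: Om_def space_PiM)
    also have "\<dots> = Om N" by simp
    also have "\<dots> = (\<Pi>\<^sub>M i\<in>{..<N}. distr (Om N) UM (\<lambda>x. x i))"
      unfolding Om_def
      by (intro PiM_cong refl distr_PiM_component[symmetric] prob_UM) auto
    finally show "distr (Om N) (\<Pi>\<^sub>M i\<in>{..<N}. UM) (\<lambda>x. restrict x {..<N}) =
       (\<Pi>\<^sub>M i\<in>{..<N}. distr (Om N) UM (\<lambda>x. x i))" .
  qed
qed

lemma expect_ind:
  assumes "k < N" "0 \<le> x" "x \<le> 1"
  shows "prob_space.expectation (Om N) (\<lambda>U. indicator {..x} (U k) :: real) = x"
proof -
  have "prob_space.expectation (Om N) (\<lambda>U. indicator {..x} (U k) :: real)
     = integral\<^sup>L (distr (Om N) UM (\<lambda>U. U k)) (indicator {..x})"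
    by (rule integral_distr[symmetric]) (use assms in \<open>auto simp: Om_def intro!: measurable_component_singleton\<close>)
  also have "distr (Om N) UM (\<lambda>U. U k) = UM"
    unfolding Om_def by (rule distr_PiM_component) (use assms prob_UM in auto)
  also have "integral\<^sup>L UM (indicator {..x}) = measure UM {..x}"
    by simp
  also have "\<dots> = x" using assms by simp
  finally show ?thesis .
qed

lemma hoeff:
  fixes x s :: real
  assumes "N > 0" "s \<ge> 0"
  defines "mu \<equiv> (\<Sum>k<N. prob_space.expectation (Om N) (\<lambda>U. indicator {..x} (U k) :: real))"
  shows "measure (Om N) {U \<in> space (Om N). (\<Sum>k<N. indicator {..x} (U k)) \<le> mu - s} \<le> exp (-2 * s\<^sup>2 / N)"
    and "measure (Om N) {U \<in> space (Om N). (\<Sum>k<N. indicator {..x} (U k)) \<ge> mu + s} \<le> exp (-2 * s\<^sup>2 / N)"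
proof -
  interpret P: prob_space "Om N" by (rule prob_Om)
  have ind: "P.indep_vars (\<lambda>_. borel) (\<lambda>k U. indicator {..x} (U k) :: real) {..<N}"
    using P.indep_vars_compose2[OF indep_coord[OF assms(1)], of "\<lambda>_ y. indicator {..x} y :: real" "\<lambda>_. borel"]
    by simp
  interpret H: Hoeffding_ineq "Om N" "{..<N}" "\<lambda>k U. indicator {..x} (U k) :: real" "\<lambda>_. 0" "\<lambda>_. 1" mu
  proof unfold_locales
    show "finite {..<N}" by simp
    show "P.indep_vars (\<lambda>_. borel) (\<lambda>k U. indicator {..x} (U k) :: real) {..<N}" by (rule ind)
    show "AE U in Om N. indicator {..x} (U i) \<in> {0..1::real}" for i
      by (auto simp: indicator_def)
  qed (simp add: mu_def)
  have pos: "(\<Sum>i\<in>{..<N}. ((\<lambda>_. 1::real) i - (\<lambda>_. 0) i)\<^sup>2) > 0" using assms by simp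
  show "measure (Om N) {U \<in> space (Om N). (\<Sum>k<N. indicator {..x} (U k)) \<le> mu - s} \<le> exp (-2 * s\<^sup>2 / N)"
    using H.Hoeffding_ineq_le[OF assms(2) pos] by simp
  show "measure (Om N) {U \<in> space (Om N). (\<Sum>k<N. indicator {..x} (U k)) \<ge> mu + s} \<le> exp (-2 * s\<^sup>2 / N)"
    using H.Hoeffding_ineq_ge[OF assms(2) pos] by simp
qed



lemma sorted_nth_le_iff:
  fixes s :: "real list"
  assumes "sorted s" "k < length s"
  shows "(s ! k \<le> x) = (k < length (filter (\<lambda>y. y \<le> x) s))"
  using assms
proof (induction s arbitrary: k)
  case Nil then show ?case by simp
next
  case (Cons a s)
  show ?case
  proof (cases "a \<le> x")
    case True
    then show ?thesis using Cons by (cases k) auto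
  next
    case False
    have "filter (\<lambda>y. y \<le> x) s = []" using Cons.prems False
      by (auto simp: filter_empty_conv)
    moreover have "(a # s) ! k \<ge> a"
      using Cons.prems by (cases k) auto
    ultimately show ?thesis using False by auto
  qed
qed

lemma cnt_eq:
  fixes U :: "nat \<Rightarrow> real"
  shows "real (length (filter (\<lambda>y. y \<le> x) (sort (map U [0..<N])))) = (\<Sum>k<N. indicator {..x} (U k))"
proof -
  have "length (filter (\<lambda>y. y \<le> x) (sort (map U [0..<N]))) = length (filter (\<lambda>y. y \<le> x) (map U [0..<N]))"
    by (simp add: filter_sort)
  also have "\<dots> = card {k. k < N \<and> U k \<le> x}"
    by (auto simp: length_filter_conv_card intro!: arg_cong[where f=card])
  finally have 1: "length (filter (\<lambda>y. y \<le> x) (sort (map U [0..<N]))) = card {k. k < N \<and> U k \<le> x}" .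
  have "(\<Sum>k<N. indicator {..x} (U k) :: real) = (\<Sum>k\<in>{..<N}. if U k \<le> x then 1 else 0)"
    by (intro sum.cong) (auto simp: indicator_def)
  also have "\<dots> = real (card ({..<N} \<inter> {k. U k \<le> x}))"
    by (simp add: sum.If_cases)
  also have "{..<N} \<inter> {k. U k \<le> x} = {k. k < N \<and> U k \<le> x}" by auto
  finally show ?thesis using 1 by simp
qed


definition Abad :: "nat \<Rightarrow> nat \<Rightarrow> real \<Rightarrow> (nat \<Rightarrow> real) set" where
  "Abad N r t = {U \<in> space (Om N). \<not> (\<forall>k<N. U k \<in> {0..1})}
     \<union> {U \<in> space (Om N). (\<Sum>k<N. indicator {..(r/N + t)} (U k)) \<le>
          (\<Sum>k<N. prob_space.expectation (Om N) (\<lambda>U. indicator {..(r/N + t)} (U k) :: real)) - N * t}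
     \<union> {U \<in> space (Om N). (\<Sum>k<N. indicator {..(r/N - t)} (U k)) \<ge>
          (\<Sum>k<N. prob_space.expectation (Om N) (\<lambda>U. indicator {..(r/N - t)} (U k) :: real)) + N * t}"

lemma Abad_sets: "Abad N r t \<in> sets (Om N)"
  unfolding Abad_def Om_def by measurable


lemma Abad_measure:
  assumes "N > 0" "t > 0"
  shows "measure (Om N) (Abad N r t) \<le> 2 * exp (-2 * N * t\<^sup>2)"
proof -
  interpret P: prob_space "Om N" by (rule prob_Om)
  let ?S0 = "{U \<in> space (Om N). \<not> (\<forall>k<N. U k \<in> {0..1})}"
  let ?S1 = "{U \<in> space (Om N). (\<Sum>k<N. indicator {..(r/N + t)} (U k)) \<le>
          (\<Sum>k<N. prob_space.expectation (Om N) (\<lambda>U. indicator {..(r/N + t)} (U k) :: real)) - N * t}"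
  let ?S2 = "{U \<in> space (Om N). (\<Sum>k<N. indicator {..(r/N - t)} (U k)) \<ge>
          (\<Sum>k<N. prob_space.expectation (Om N) (\<lambda>U. indicator {..(r/N - t)} (U k) :: real)) + N * t}"
  have s0: "?S0 \<in> sets (Om N)" "?S1 \<in> sets (Om N)" "?S2 \<in> sets (Om N)"
    unfolding Om_def by measurable
  have ae: "AE U in Om N. \<forall>k\<in>{..<N}. U k \<in> {0..1}"
  proof (rule AE_finite_allI)
    fix k assume k: "k \<in> {..<N}"
    have "AE y in UM. y \<in> {0..1}" by (rule AE_uniform_measureI) auto
    then show "AE U in Om N. U k \<in> {0..1}"
      unfolding Om_def by (rule AE_PiM_component[OF prob_UM k])
  qed simp
  have m0: "measure (Om N) ?S0 = 0"
  proof (rule P.prob_eq_0[THEN iffD2, OF s0(1)])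
    show "AE x in Om N. x \<notin> ?S0" using ae by eventually_elim auto
  qed
  have e: "exp (-2 * (real N * t)\<^sup>2 / real N) = exp (-2 * real N * t\<^sup>2)" using assms by (simp add: power2_eq_square)
  have m1: "measure (Om N) ?S1 \<le> exp (-2 * (real N * t)\<^sup>2 / real N)"
    by (rule hoeff(1)) (use assms in auto)
  have m2: "measure (Om N) ?S2 \<le> exp (-2 * (real N * t)\<^sup>2 / real N)"
    by (rule hoeff(2)) (use assms in auto)
  have eqA: "Abad N r t = ?S0 \<union> ?S1 \<union> ?S2" by (simp only: Abad_def)
  have "measure (Om N) (Abad N r t) \<le> measure (Om N) (?S0 \<union> ?S1) + measure (Om N) ?S2"
    unfolding eqA by (rule measure_Un_le[OF sets.Un[OF s0(1,2)] s0(3)])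
  also have "\<dots> \<le> measure (Om N) ?S0 + measure (Om N) ?S1 + measure (Om N) ?S2"
    using measure_Un_le[OF s0(1,2)] by linarith
  finally show ?thesis using m0 m1 m2 e by linarith
qed


lemma Abad_cover:
  assumes "N > 0" "t > 0" "r \<le> N" "U \<in> space (Om N)"
    and dev: "\<bar>order_stat N U r - real r / real N\<bar> > t"
  shows "U \<in> Abad N r t"
proof (rule ccontr)
  assume nA: "U \<notin> Abad N r t"
  then have G: "\<forall>k<N. U k \<in> {0..1}" using assms(4) unfolding Abad_def by blast
  define s where "s = sort (map U [0..<N])"
  define j where "j = r - 1"
  have js: "j < length s" using assms unfolding s_def j_def by simp
  have srt: "sorted s" unfolding s_def by simp
  have os: "order_stat N U r = s ! j" unfolding order_stat_def s_def j_def ..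
  have "s ! j \<in> set s" using js by simp
  then have inr: "s ! j \<in> {0..1}" using G unfolding s_def by auto
  have cnt: "\<And>x. real (length (filter (\<lambda>y. y \<le> x) s)) = (\<Sum>k<N. indicator {..x} (U k))"
    unfolding s_def by (rule cnt_eq)
  have rN: "real r / real N \<le> 1" using assms by simp
  have Ngt: "real N > 0" using assms by simp
  from dev consider (up) "s ! j > r/N + t" | (lo) "s ! j < r/N - t" unfolding os by linarith
  then show False
  proof cases
    case up
    then have a1: "r/N + t \<le> 1" using inr by auto
    have "\<not> (j < length (filter (\<lambda>y. y \<le> r/N + t) s))"
      using sorted_nth_le_iff[OF srt js, of "r/N + t"] up by simp
    then have "(\<Sum>k<N. indicator {..(r/N + t)} (U k) :: real) \<le> r"
      using cnt[of "r/N + t"] unfolding j_def by linarith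
    moreover have "(\<Sum>k<N. prob_space.expectation (Om N) (\<lambda>U. indicator {..(r/N + t)} (U k) :: real)) = N * (r/N + t)"
      using a1 assms by (simp add: expect_ind)
    moreover have "real N * (real r / real N + t) - real N * t = real r" using Ngt by (simp add: field_simps)
    ultimately have "(\<Sum>k<N. indicator {..(r/N + t)} (U k)) \<le>
          (\<Sum>k<N. prob_space.expectation (Om N) (\<lambda>U. indicator {..(r/N + t)} (U k) :: real)) - N * t"
      by linarith
    then have "U \<in> Abad N r t" unfolding Abad_def using assms(4) by blast
    then show False using nA by simp
  next
    case lo
    have b0: "0 \<le> r/N - t" using lo inr by auto
    have b1: "r/N - t \<le> 1" using rN assms(2) by linarith
    note b0 = b0 b1
    have "j < length (filter (\<lambda>y. y \<le> r/N - t) s)"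
      using sorted_nth_le_iff[OF srt js, of "r/N - t"] lo by simp
    then have "(\<Sum>k<N. indicator {..(r/N - t)} (U k) :: real) \<ge> r"
      using cnt[of "r/N - t"] unfolding j_def by linarith
    moreover have "(\<Sum>k<N. prob_space.expectation (Om N) (\<lambda>U. indicator {..(r/N - t)} (U k) :: real)) = N * (r/N - t)"
      using b0 assms by (simp add: expect_ind)
    moreover have "real N * (real r / real N - t) + real N * t = real r" using Ngt by (simp add: field_simps)
    ultimately have "(\<Sum>k<N. indicator {..(r/N - t)} (U k)) \<ge>
          (\<Sum>k<N. prob_space.expectation (Om N) (\<lambda>U. indicator {..(r/N - t)} (U k) :: real)) + N * t"
      by linarith
    then have "U \<in> Abad N r t" unfolding Abad_def using assms(4) by blast
    then show False using nA by simp
  qed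
qed



lemma delta_sigma: "delta_shape n = Sigma {1..n-1} (\<lambda>i. {1..n-i})"
  unfolding delta_shape_def by auto

lemma finite_delta: "finite (delta_shape n)"
  unfolding delta_sigma by simp

lemma card_delta: "card (delta_shape n) = tri_N n"
proof -
  have "card (delta_shape n) = (\<Sum>i=1..n-1. n - i)"
    unfolding delta_sigma by simp
  also have "\<dots> = (\<Sum>i=1..n-1. i)"
  proof (cases "n = 0")
    case False
    have "(\<Sum>i=1..n-1. i) = (\<Sum>i=1..n-1. 1 + (n - 1) - i)"
      using sum.atLeastAtMost_rev[of "\<lambda>i. i" 1 "n - 1"] by simp
    also have "\<dots> = (\<Sum>i=1..n-1. n - i)" using False by simp
    finally show ?thesis by simp
  qed simp
  also have "\<dots> = (n - 1) * (n - 1 + 1) div 2"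
    using gauss_sum_from_Suc_0[of "n - 1", where 'a=nat] by simp
  also have "\<dots> = tri_N n"
    unfolding tri_N_def choose_two by (cases n) (auto simp: mult.commute)
  finally show ?thesis .
qed

lemma finite_SYT: "finite sh \<Longrightarrow> finite (SYT sh)"
proof -
  assume f: "finite sh"
  have "SYT sh \<subseteq> {T. \<forall>x. (x \<in> sh \<longrightarrow> T x \<in> {1..card sh}) \<and> (x \<notin> sh \<longrightarrow> T x = 0)}"
    unfolding SYT_def bij_betw_def by auto
  moreover have "finite {T. \<forall>x. (x \<in> sh \<longrightarrow> T x \<in> {1..card sh}) \<and> (x \<notin> sh \<longrightarrow> T x = (0::nat))}"
    by (rule finite_set_of_finite_funs) (use f in auto)
  ultimately show ?thesis by (rule finite_subset)
qed

lemma SYT_nonempty: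
  fixes sh :: "(nat \<times> nat) set"
  assumes fin: "finite sh" and K: "\<And>i j. (i, j) \<in> sh \<Longrightarrow> j < K"
  shows "SYT sh \<noteq> {}"
proof -
  define key :: "nat \<times> nat \<Rightarrow> nat" where "key = (\<lambda>(i, j). i * K + j)"
  define T where "T = (\<lambda>b. if b \<in> sh then card {c \<in> sh. key c \<le> key b} else 0)"
  have mono: "T b < T c" if "b \<in> sh" "c \<in> sh" "key b < key c" for b c
  proof -
    have "c \<in> {x \<in> sh. key x \<le> key c}" "c \<notin> {x \<in> sh. key x \<le> key b}" using that by auto
    moreover have "{x \<in> sh. key x \<le> key b} \<subseteq> {x \<in> sh. key x \<le> key c}" using that by auto
    ultimately have "{x \<in> sh. key x \<le> key b} \<subset> {x \<in> sh. key x \<le> key c}"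
      by blast
    then have "card {x \<in> sh. key x \<le> key b} < card {x \<in> sh. key x \<le> key c}"
      by (rule psubset_card_mono[rotated]) (use fin in auto)
    then show ?thesis using that by (simp add: T_def)
  qed
  have keyinj: "b = c" if "b \<in> sh" "c \<in> sh" "key b = key c" for b c
  proof -
    obtain i j i' j' where b: "b = (i, j)" and c: "c = (i', j')" by (cases b, cases c)
    have "j < K" "j' < K" using that K b c by auto
    then have "(i * K + j) div K = i" "(i * K + j) mod K = j" "(i' * K + j') div K = i'" "(i' * K + j') mod K = j'"
      by auto
    then show ?thesis using that b c by (auto simp: key_def)
  qed
  have inj: "inj_on T sh"
  proof (rule inj_onI)
    fix b c assume bc: "b \<in> sh" "c \<in> sh" "T b = T c"
    show "b = c"
    proof (rule ccontr)
      assume "b \<noteq> c"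
      then have "key b \<noteq> key c" using keyinj bc by blast
      then have "key b < key c \<or> key c < key b" by arith
      then show False using mono[of b c] mono[of c b] bc by auto
    qed
  qed
  have img: "T ` sh \<subseteq> {1..card sh}"
  proof
    fix v assume "v \<in> T ` sh"
    then obtain b where b: "b \<in> sh" "v = T b" by auto
    have "b \<in> {c \<in> sh. key c \<le> key b}" using b by auto
    then have "card {c \<in> sh. key c \<le> key b} \<ge> 1"
      using fin by (metis (no_types, lifting) One_nat_def Suc_leI card_gt_0_iff empty_iff finite_subset mem_Collect_eq subsetI)
    moreover have "card {c \<in> sh. key c \<le> key b} \<le> card sh"
      by (rule card_mono) (use fin in auto)
    ultimately show "v \<in> {1..card sh}" using b by (simp add: T_def)
  qed
  have "card (T ` sh) = card {1..card sh}" using card_image[OF inj] by simp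
  then have "T ` sh = {1..card sh}" by (intro card_subset_eq img) auto
  then have bij: "bij_betw T sh {1..card sh}" using inj by (simp add: bij_betw_def)
  have "T \<in> SYT sh"
    unfolding SYT_def
  proof (intro CollectI conjI allI impI bij)
    fix i j assume "(i, j) \<in> sh \<and> (i, j + 1) \<in> sh"
    then show "T (i, j) < T (i, j + 1)" by (intro mono) (auto simp: key_def)
  next
    fix i j assume "(i, j) \<in> sh \<and> (i + 1, j) \<in> sh"
    moreover have "j < K" using calculation K by auto
    ultimately show "T (i, j) < T (i + 1, j)" by (intro mono) (auto simp: key_def)
  next
    fix b assume "b \<notin> sh" then show "T b = 0" by (simp add: T_def)
  qed
  then show ?thesis by blast
qed

lemma SYT_delta_nonempty: "SYT (delta_shape n) \<noteq> {}"
  by (rule SYT_nonempty[where K = "n + 1"], rule finite_delta) (auto simp: delta_shape_def)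

lemma SYT_val_le:
  assumes "T \<in> SYT sh" shows "T b \<le> card sh"
proof (cases "b \<in> sh")
  case True
  then show ?thesis using assms unfolding SYT_def bij_betw_def by auto
next
  case False
  have "\<forall>b. b \<notin> sh \<longrightarrow> T b = 0" using assms unfolding SYT_def by blast
  then have "T b = 0" using False by blast
  then show ?thesis by simp
qed



lemma measure_le_sup:
  assumes "A \<subseteq> B" "B \<in> sets M" "finite_measure M"
  shows "measure M A \<le> measure M B"
proof (cases "A \<in> sets M")
  case True
  then show ?thesis using assms finite_measure.finite_measure_mono by blast
next
  case False
  then show ?thesis by (simp add: measure_notin_sets)
qed

lemma key_bound:
  assumes n2: "n \<ge> 2" and t: "t > 0"
  shows "measure (joint_space n)
            {(T, U) \<in> space (joint_space n).
               \<bar>poissonized n T U b - real (T b) / real (tri_N n)\<bar> > t}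
         \<le> 2 * exp (-2 * real (tri_N n) * t\<^sup>2)"
proof -
  define N where "N = tri_N n"
  define S where "S = SYT (delta_shape n)"
  define M1 where "M1 = measure_pmf (pmf_of_set S)"
  have Npos: "N > 0" unfolding N_def tri_N_def using n2 by simp
  have finS: "finite S" unfolding S_def by (rule finite_SYT[OF finite_delta])
  have neS: "S \<noteq> {}" unfolding S_def by (rule SYT_delta_nonempty)
  have J: "joint_space n = M1 \<Otimes>\<^sub>M Om N"
    unfolding joint_space_def M1_def S_def Om_def N_def ..
  interpret P: prob_space "Om N" by (rule prob_Om)
  interpret J: prob_space "joint_space n"
    unfolding J M1_def by (intro prob_space_pair prob_Om measure_pmf.prob_space_axioms)
  define B where "B = (\<Union>r\<in>{..N}. {T. T \<in> S \<and> T b = r} \<times> Abad N r t) \<union> ((UNIV - S) \<times> space (Om N))"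
  have Bsets: "B \<in> sets (joint_space n)"
    unfolding B_def J M1_def using Abad_sets by (intro sets.Un sets.finite_UN pair_measureI) auto
  have le: "T b \<le> N" if "T \<in> S" for T
    using SYT_val_le[OF that[unfolded S_def]] card_delta unfolding N_def by simp
  have sub: "{(T, U) \<in> space (joint_space n).
               \<bar>poissonized n T U b - real (T b) / real (tri_N n)\<bar> > t} \<subseteq> B"
  proof safe
    fix T U assume sp: "(T, U) \<in> space (joint_space n)"
      and d: "t < \<bar>poissonized n T U b - real (T b) / real (tri_N n)\<bar>"
    have U: "U \<in> space (Om N)" using sp unfolding J by (simp add: space_pair_measure)
    show "(T, U) \<in> B"
    proof (cases "T \<in> S")
      case True
      have "U \<in> Abad N (T b) t"
        using Abad_cover[OF Npos t le[OF True] U] d unfolding poissonized_def N_def by simp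
      then show ?thesis unfolding B_def using True le[OF True] by blast
    next
      case False
      then show ?thesis unfolding B_def using U by blast
    qed
  qed
  have "emeasure (joint_space n) B = (\<integral>\<^sup>+x. emeasure (Om N) (Pair x -` B) \<partial>M1)"
    unfolding J by (rule P.emeasure_pair_measure_alt) (use Bsets J in simp)
  also have "\<dots> \<le> (\<integral>\<^sup>+x. ennreal (2 * exp (-2 * real N * t\<^sup>2)) \<partial>M1)"
  proof (rule nn_integral_mono_AE)
    have "AE x in M1. x \<in> S" unfolding M1_def using finS neS by (simp add: AE_measure_pmf_iff)
    then show "AE x in M1. emeasure (Om N) (Pair x -` B) \<le> ennreal (2 * exp (-2 * real N * t\<^sup>2))"
    proof (rule eventually_mono)
      fix x assume x: "x \<in> S"
      have "Pair x -` B = Abad N (x b) t" unfolding B_def using x le[OF x] by auto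
      then have "emeasure (Om N) (Pair x -` B) = ennreal (measure (Om N) (Abad N (x b) t))"
        by (simp add: P.emeasure_eq_measure)
      also have "\<dots> \<le> ennreal (2 * exp (-2 * real N * t\<^sup>2))"
        using Abad_measure[OF Npos t] by (simp add: ennreal_leI)
      finally show "emeasure (Om N) (Pair x -` B) \<le> ennreal (2 * exp (-2 * real N * t\<^sup>2))" .
    qed
  qed
  also have "\<dots> = ennreal (2 * exp (-2 * real N * t\<^sup>2))"
    unfolding M1_def by (simp add: measure_pmf.emeasure_space_1)
  finally have "measure (joint_space n) B \<le> 2 * exp (-2 * real N * t\<^sup>2)"
    by (simp add: J.emeasure_eq_measure)
  moreover have "measure (joint_space n) {(T, U) \<in> space (joint_space n).
               \<bar>poissonized n T U b - real (T b) / real (tri_N n)\<bar> > t} \<le> measure (joint_space n) B"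
    by (rule measure_le_sup[OF sub Bsets]) unfold_locales
  ultimately show ?thesis unfolding N_def by linarith
qed



lemma two_triN: "2 * real (tri_N n) = real n * (real n - 1)"
proof -
  have e: "even (n * (n - 1))" by (cases n) auto
  have "2 * tri_N n = n * (n - 1)" unfolding tri_N_def choose_two using e by simp
  then have "2 * real (tri_N n) = real (n * (n - 1))" by (metis of_nat_mult of_nat_numeral)
  also have "\<dots> = real n * (real n - 1)" by (cases n) (auto simp: algebra_simps)
  finally show ?thesis .
qed

lemma exp_neg_le_inv: "y > 0 \<Longrightarrow> exp (- y) \<le> 1 / (y::real)"
proof -
  assume y: "y > 0"
  have "exp y \<ge> 1 + y" by (rule exp_ge_add_one_self)
  then have "y \<le> exp y" by linarith
  then show ?thesis using y by (simp add: exp_minus field_simps)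
qed

theorem lemma3p3:
  fixes l m :: nat and \<delta> \<epsilon> :: real
  assumes "l \<ge> 2" and "1 \<le> m" and "m \<le> l div 2" and "\<delta> > 0" and "\<epsilon> > 0"
  shows "(\<lambda>n. measure (joint_space n)
            {(T, U) \<in> space (joint_space n).
               real n powr (1 - \<delta>) *
               \<bar>poissonized n T U (rot_box n l m) - real (T (rot_box n l m)) / real (tri_N n)\<bar>
               > \<epsilon>}) \<longlonglongrightarrow> 0"
proof -
  define h where "h = (\<lambda>n::nat. (4 / \<epsilon>\<^sup>2) * real n powr (-2 * \<delta>))"
  have "(\<lambda>n::nat. real n powr (-2 * \<delta>)) \<longlonglongrightarrow> 0"
    by (rule tendsto_neg_powr) (use assms(4) filterlim_real_sequentially in auto)
  then have "(\<lambda>n::nat. (4 / \<epsilon>\<^sup>2) * real n powr (-2 * \<delta>)) \<longlonglongrightarrow> (4 / \<epsilon>\<^sup>2) * 0"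
    by (intro tendsto_mult tendsto_const)
  then have hlim: "h \<longlonglongrightarrow> 0" unfolding h_def by simp
  have "\<forall>\<^sub>F n in sequentially. norm (measure (joint_space n)
            {(T, U) \<in> space (joint_space n).
               real n powr (1 - \<delta>) *
               \<bar>poissonized n T U (rot_box n l m) - real (T (rot_box n l m)) / real (tri_N n)\<bar>
               > \<epsilon>}) \<le> h n"
    using eventually_ge_at_top[of 2]
  proof (rule eventually_mono)
    fix n :: nat assume n2: "n \<ge> 2"
    define b where "b = rot_box n l m"
    define x where "x = real n powr (1 - \<delta>)"
    define t where "t = \<epsilon> / x"
    define N where "N = real (tri_N n)"
    have npos: "real n > 0" using n2 by simp
    have xpos: "x > 0" unfolding x_def using npos by simp
    have tpos: "t > 0" unfolding t_def using xpos assms(5) by simp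
    have seteq: "{(T, U) \<in> space (joint_space n).
               real n powr (1 - \<delta>) *
               \<bar>poissonized n T U (rot_box n l m) - real (T (rot_box n l m)) / real (tri_N n)\<bar>
               > \<epsilon>} = {(T, U) \<in> space (joint_space n).
               \<bar>poissonized n T U b - real (T b) / real (tri_N n)\<bar> > t}"
    proof -
      have iff: "\<And>d. (\<epsilon> < x * d) \<longleftrightarrow> (t < d)"
        unfolding t_def using xpos by (simp add: pos_divide_less_eq mult.commute)
      show ?thesis unfolding b_def x_def[symmetric] by (simp only: iff)
    qed
    have m: "measure (joint_space n) {(T, U) \<in> space (joint_space n).
               \<bar>poissonized n T U b - real (T b) / real (tri_N n)\<bar> > t} \<le> 2 * exp (-2 * N * t\<^sup>2)"
      unfolding N_def by (rule key_bound[OF n2 tpos])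
    have N4: "N \<ge> (real n)\<^sup>2 / 4"
    proof -
      have "real n - 1 \<ge> real n / 2" using n2 by simp
      then have "real n * (real n - 1) \<ge> real n * (real n / 2)"
        using npos by (intro mult_left_mono) auto
      then show ?thesis using two_triN[of n] unfolding N_def by (simp add: power2_eq_square)
    qed
    have x2: "(real n)\<^sup>2 = x\<^sup>2 * real n powr (2 * \<delta>)"
    proof -
      have "x\<^sup>2 * real n powr (2 * \<delta>) = real n powr (1 - \<delta>) * real n powr (1 - \<delta>) * real n powr (2 * \<delta>)"
        unfolding x_def by (simp add: power2_eq_square)
      also have "\<dots> = real n powr ((1 - \<delta>) + (1 - \<delta>) + 2 * \<delta>)"
        by (simp only: powr_add)
      also have "\<dots> = real n powr 2" by simp
      also have "\<dots> = (real n)\<^sup>2" using npos by (simp add: powr_numeral)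
      finally show ?thesis by simp
    qed
    have Nt: "N * t\<^sup>2 \<ge> \<epsilon>\<^sup>2 / 4 * real n powr (2 * \<delta>)"
    proof -
      have "N * t\<^sup>2 \<ge> (real n)\<^sup>2 / 4 * t\<^sup>2"
        using N4 by (intro mult_right_mono) auto
      moreover have "(real n)\<^sup>2 / 4 * t\<^sup>2 = \<epsilon>\<^sup>2 / 4 * real n powr (2 * \<delta>)"
        unfolding x2 t_def using xpos by (simp add: field_simps power2_eq_square)
      ultimately show ?thesis by simp
    qed
    have ppos: "real n powr (2 * \<delta>) > 0" using npos by simp
    have Ntpos: "N * t\<^sup>2 > 0"
    proof -
      have "\<epsilon>\<^sup>2 / 4 * real n powr (2 * \<delta>) > 0" using ppos assms(5) by simp
      then show ?thesis using Nt by linarith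
    qed
    have "2 * exp (-2 * N * t\<^sup>2) \<le> 2 * (1 / (2 * N * t\<^sup>2))"
      using exp_neg_le_inv[of "2 * N * t\<^sup>2"] Ntpos by simp
    also have "\<dots> = 1 / (N * t\<^sup>2)" by simp
    also have "\<dots> \<le> 1 / (\<epsilon>\<^sup>2 / 4 * real n powr (2 * \<delta>))"
    proof (rule divide_left_mono[OF Nt])
      have q: "\<epsilon>\<^sup>2 / 4 * real n powr (2 * \<delta>) > 0" using ppos assms(5) by simp
      show "0 < N * t\<^sup>2 * (\<epsilon>\<^sup>2 / 4 * real n powr (2 * \<delta>))" using mult_pos_pos[OF Ntpos q] by simp
    qed simp
    also have "\<dots> = h n"
      unfolding h_def using ppos assms(5) by (simp add: powr_minus field_simps)
    finally have "2 * exp (-2 * N * t\<^sup>2) \<le> h n" .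
    then show "norm (measure (joint_space n)
            {(T, U) \<in> space (joint_space n).
               real n powr (1 - \<delta>) *
               \<bar>poissonized n T U (rot_box n l m) - real (T (rot_box n l m)) / real (tri_N n)\<bar>
               > \<epsilon>}) \<le> h n"
      unfolding seteq using m by simp
  qed
  then show ?thesis using hlim by (rule Lim_null_comparison)
qed


end
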